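(* Let $\mathcal T=(T,\lambda)$ be a temporal oriented tree with connectivity graph $G$, and let $H$ be an induced cycle of $G$ of even length $k\ge 6$, with vertices cyclically ordered $u_1,\dots,u_k$ (indices taken modulo $k$). For each edge $e=uv$ of $G$, let $Q_e$ be any temporal path of $\mathcal T$ from $u$ to $v$ or from $v$ to $u$. Then for every $i$, the paths $Q_{u_iu_{i+1}}$ and $Q_{u_{i+2}u_{i+3}}$ have a common vertex.
   Context: A temporal digraph is a pair $(D,\lambda)$ with $D=(V,A)$ a finite digraph and $\lambda:A\to 2^{\{1,\dots,t_{\max}\}}$ giving the time-steps at which each arc is active. A temporal oriented tree $\mathcal T=(T,\lambda)$ is one whose underlying digraph $T$ is an orientation of a tree. A temporal path is a sequence $(v_1,v_2,t_1),\dots,(v_{k-1},v_k,t_{k-1})$ with pairwise distinct $v_i$, $\overrightarrow{v_iv_{i+1}}\in A$, $t_i\in\lambda(\overrightarrow{v_iv_{i+1}})$ and $t_1<\dots<t_{k-1}$. Two vertices $u\ne v$ are temporally connected if there is a temporal path from $u$ to $v$ or from $v$ to $u$. The connectivity graph of $\mathcal T$ is the undirected graph $G$ with $V(G)=V(T)$ and $uv\in E(G)$ iff $u\neq v$ and $u,v$ are temporally connected. *)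

theory Defs
  imports Main
begin

definition temporal_digraph ::
  "'v set \<Rightarrow> ('v \<times> 'v) set \<Rightarrow> (('v \<times> 'v) \<Rightarrow> nat set) \<Rightarrow> nat \<Rightarrow> bool" where
  "temporal_digraph V A lam tmax \<longleftrightarrow>
     finite V \<and> A \<subseteq> V \<times> V \<and> (\<forall>v. (v, v) \<notin> A) \<and>
     (\<forall>a\<in>A. lam a \<subseteq> {1..tmax})"

definition und :: "('v \<times> 'v) set \<Rightarrow> ('v \<times> 'v) set" where
  "und A = A \<union> A\<inverse>"

definition oriented_tree :: "'v set \<Rightarrow> ('v \<times> 'v) set \<Rightarrow> bool" where
  "oriented_tree V A \<longleftrightarrow>
     finite V \<and> V \<noteq> {} \<and> A \<subseteq> V \<times> V \<and> (\<forall>v. (v, v) \<notin> A) \<and>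
     (\<forall>u v. (u, v) \<in> A \<longrightarrow> (v, u) \<notin> A) \<and>
     (\<forall>u\<in>V. \<forall>v\<in>V. (u, v) \<in> (und A)\<^sup>*) \<and>
     card A = card V - 1"

definition temporal_oriented_tree ::
  "'v set \<Rightarrow> ('v \<times> 'v) set \<Rightarrow> (('v \<times> 'v) \<Rightarrow> nat set) \<Rightarrow> nat \<Rightarrow> bool" where
  "temporal_oriented_tree V A lam tmax \<longleftrightarrow>
     temporal_digraph V A lam tmax \<and> oriented_tree V A"

text \<open>A temporal path (v_1,v_2,t_1),...,(v_{k-1},v_k,t_{k-1}), represented by the
  vertex list vs = [v_1,...,v_k] and the time list ts = [t_1,...,t_{k-1}].\<close>
definition temporal_path ::
  "('v \<times> 'v) set \<Rightarrow> (('v \<times> 'v) \<Rightarrow> nat set) \<Rightarrow> 'v list \<Rightarrow> nat list \<Rightarrow> bool" where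
  "temporal_path A lam vs ts \<longleftrightarrow>
     length vs = Suc (length ts) \<and> distinct vs \<and>
     (\<forall>i < length ts. (vs ! i, vs ! Suc i) \<in> A \<and> ts ! i \<in> lam (vs ! i, vs ! Suc i)) \<and>
     sorted_wrt (<) ts"

definition temporal_path_from_to ::
  "('v \<times> 'v) set \<Rightarrow> (('v \<times> 'v) \<Rightarrow> nat set) \<Rightarrow> 'v list \<times> nat list \<Rightarrow> 'v \<Rightarrow> 'v \<Rightarrow> bool" where
  "temporal_path_from_to A lam P u v \<longleftrightarrow>
     temporal_path A lam (fst P) (snd P) \<and> hd (fst P) = u \<and> last (fst P) = v"

definition temporally_connected ::
  "'v set \<Rightarrow> ('v \<times> 'v) set \<Rightarrow> (('v \<times> 'v) \<Rightarrow> nat set) \<Rightarrow> 'v \<Rightarrow> 'v \<Rightarrow> bool" where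
  "temporally_connected V A lam u v \<longleftrightarrow>
     u \<in> V \<and> v \<in> V \<and> u \<noteq> v \<and>
     ((\<exists>P. temporal_path_from_to A lam P u v) \<or> (\<exists>P. temporal_path_from_to A lam P v u))"

definition induced_cycle :: "'v set \<Rightarrow> ('v \<Rightarrow> 'v \<Rightarrow> bool) \<Rightarrow> (nat \<Rightarrow> 'v) \<Rightarrow> nat \<Rightarrow> bool" where
  "induced_cycle V E c k \<longleftrightarrow>
     k \<ge> 3 \<and> inj_on c {..<k} \<and> c ` {..<k} \<subseteq> V \<and>
     (\<forall>i<k. \<forall>j<k. E (c i) (c j) \<longleftrightarrow> (j = Suc i mod k \<or> i = Suc j mod k))"

end

theory Submission
  imports Defs "HOL-Number_Theory.Cong"
begin

lemma adj1:
  fixes k i t :: nat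
  assumes k: "k \<ge> 6" and t: "t \<le> k - 3"
    and h: "(i+3+t) mod k = Suc ((i+1) mod k) mod k \<or> (i+1) mod k = Suc ((i+3+t) mod k) mod k"
  shows "t = k - 3"
proof -
  have "(i+(3+t)) mod k = (i+2) mod k \<or> (i+1) mod k = (i+(4+t)) mod k"
    using h by (simp add: mod_Suc_eq add_ac)
  hence "(3+t) mod k = 2 mod k \<or> 1 mod k = (4+t) mod k"
    using cong_add_lcancel_nat[of i "3+t" 2 k] cong_add_lcancel_nat[of i 1 "4+t" k]
    by (auto simp: cong_def)
  hence h2: "(3+t) mod k = 2 \<or> 1 = (4+t) mod k" using k by simp
  show ?thesis
  proof (rule ccontr)
    assume "t \<noteq> k - 3"
    hence "4 + t \<le> k" using t k by auto
    show False
    proof (cases "4 + t = k")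
      case True
      thus False using h2 k by auto
    next
      case False
      hence "4 + t < k" using \<open>4+t \<le> k\<close> by auto
      thus False using h2 by auto
    qed
  qed
qed

lemma adj2:
  fixes k i t :: nat
  assumes k: "k \<ge> 6" and t: "t \<le> k - 3"
    and h: "(i+3+t) mod k = Suc ((i+2) mod k) mod k \<or> (i+2) mod k = Suc ((i+3+t) mod k) mod k"
  shows "t = 0"
proof -
  have q1: "Suc ((i+2) mod k) mod k = (i+3) mod k" by (simp add: mod_Suc_eq numeral_3_eq_3)
  have q2: "Suc ((i+3+t) mod k) mod k = (i+(4+t)) mod k" by (simp add: mod_Suc_eq add_ac)
  have "(i+(3+t)) mod k = (i+3) mod k \<or> (i+2) mod k = (i+(4+t)) mod k"
    using h q1 q2 by (metis add.assoc)
  hence "(3+t) mod k = 3 mod k \<or> 2 mod k = (4+t) mod k"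
    using cong_add_lcancel_nat[of i "3+t" 3 k] cong_add_lcancel_nat[of i 2 "4+t" k]
    by (auto simp: cong_def)
  hence h2: "(3+t) mod k = 3 \<or> 2 = (4+t) mod k" using k by simp
  show ?thesis
  proof (rule ccontr)
    assume "t \<noteq> 0"
    show False
    proof (cases "3 + t = k")
      case True
      hence "4 + t = k + 1" by simp
      moreover have "(k+1) mod k = 1" using k by (simp add: mod_Suc)
      ultimately have "(4+t) mod k = 1" by metis
      moreover have "(3+t) mod k = 0" using True by simp
      ultimately show False using h2 by simp
    next
      case False
      hence "3 + t < k" using t k by auto
      have "4 + t = k \<or> 4 + t < k" using \<open>3+t<k\<close> by auto
      thus False using h2 \<open>3+t<k\<close> \<open>t\<noteq>0\<close> by auto
    qed
  qed
qed

lemma ivt: "P (0::nat) \<Longrightarrow> \<not> P n \<Longrightarrow> \<exists>m<n. P m \<and> \<not> P (Suc m)"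
proof (induction n)
  case 0 thus ?case by simp
next
  case (Suc n)
  show ?case
  proof (cases "P n")
    case True thus ?thesis using Suc.prems by blast
  next
    case False thus ?thesis using Suc by (meson less_SucI)
  qed
qed

lemma rt_sym: "(x,y) \<in> (und F)\<^sup>* \<Longrightarrow> (y,x) \<in> (und F)\<^sup>*"
proof -
  assume "(x,y) \<in> (und F)\<^sup>*"
  hence "(y,x) \<in> ((und F)\<inverse>)\<^sup>*" by (rule rtrancl_converseI)
  moreover have "(und F)\<inverse> = und F" by (auto simp: und_def)
  ultimately show ?thesis by simp
qed

lemma reach_fin_aux: "(x,y) \<in> r\<^sup>* \<Longrightarrow> x = y \<or> y \<in> Range r"
  by (induction rule: rtrancl_induct) auto

lemma reach_finite: "finite F \<Longrightarrow> finite T \<Longrightarrow> finite ((und F)\<^sup>* `` T)"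
proof -
  assume f: "finite F" "finite T"
  have "(und F)\<^sup>* `` T \<subseteq> T \<union> Range (und F)" by (blast dest: reach_fin_aux)
  moreover have "finite (und F)" using f by (simp add: und_def)
  ultimately show ?thesis using f by (meson finite_Range finite_UnI finite_subset)
qed

lemma reach_step:
  assumes "x \<in> (und F)\<^sup>* `` S" "{x,y} = {a,b}"
  shows "(und (insert (a,b) F))\<^sup>* `` S \<subseteq> (und F)\<^sup>* `` (insert y S)"
proof
  fix w assume "w \<in> (und (insert (a,b) F))\<^sup>* `` S"
  then obtain s where s: "s \<in> S" "(s,w) \<in> (und (insert (a,b) F))\<^sup>*" by auto
  from s(2) show "w \<in> (und F)\<^sup>* `` (insert y S)"
  proof (induction rule: rtrancl_induct)
    case base thus ?case using s(1) by auto
  next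
    case (step w w')
    show ?case
    proof (cases "(w,w') \<in> und F")
      case True
      from step.IH obtain s' where "s' \<in> insert y S" "(s',w) \<in> (und F)\<^sup>*" by auto
      thus ?thesis using True by (meson ImageI rtrancl.rtrancl_into_rtrancl)
    next
      case False
      hence "w' \<in> {a,b}" using step.hyps(2) by (auto simp: und_def)
      hence "w' = x \<or> w' = y" using assms(2) by auto
      thus ?thesis
      proof
        assume "w' = x"
        thus ?thesis using assms(1) by blast
      next
        assume "w' = y" thus ?thesis by auto
      qed
    qed
  qed
qed

lemma reach_same:
  assumes "a \<notin> (und F)\<^sup>* `` S" "b \<notin> (und F)\<^sup>* `` S"
  shows "(und (insert (a,b) F))\<^sup>* `` S \<subseteq> (und F)\<^sup>* `` S"
proof
  fix w assume "w \<in> (und (insert (a,b) F))\<^sup>* `` S"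
  then obtain s where s: "s \<in> S" "(s,w) \<in> (und (insert (a,b) F))\<^sup>*" by auto
  from s(2) show "w \<in> (und F)\<^sup>* `` S"
  proof (induction rule: rtrancl_induct)
    case base thus ?case using s(1) by auto
  next
    case (step w w')
    show ?case
    proof (cases "(w,w') \<in> und F")
      case True
      from step.IH obtain s' where "s' \<in> S" "(s',w) \<in> (und F)\<^sup>*" by auto
      thus ?thesis using True by (meson ImageI rtrancl.rtrancl_into_rtrancl)
    next
      case False
      hence "w \<in> {a,b}" using step.hyps(2) by (auto simp: und_def)
      thus ?thesis using assms step.IH by auto
    qed
  qed
qed

lemma reach_card:
  assumes "finite F"
  shows "finite S \<Longrightarrow> card ((und F)\<^sup>* `` S) \<le> card F + card S"
  using assms
proof (induction F arbitrary: S rule: finite_induct)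
  case empty
  show ?case by (simp add: und_def)
next
  case (insert f F)
  obtain a b where f: "f = (a,b)" by fastforce
  have cF: "card (insert f F) = Suc (card F)" using insert by simp
  show ?case
  proof (cases "a \<in> (und F)\<^sup>* `` S \<or> b \<in> (und F)\<^sup>* `` S")
    case True
    then obtain x y where xy: "x \<in> (und F)\<^sup>* `` S" "{x,y} = {a,b}" by blast
    have "card ((und (insert f F))\<^sup>* `` S) \<le> card ((und F)\<^sup>* `` (insert y S))"
      using reach_step[OF xy] f reach_finite[of F "insert y S"] insert by (intro card_mono) auto
    also have "\<dots> \<le> card F + card (insert y S)" using insert by simp
    also have "\<dots> \<le> card F + Suc (card S)" using insert by (simp add: card_insert_if)
    finally show ?thesis using cF by simp
  next
    case False
    have "card ((und (insert f F))\<^sup>* `` S) \<le> card ((und F)\<^sup>* `` S)"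
      using reach_same[of a F S b] False f reach_finite insert by (intro card_mono) auto
    also have "\<dots> \<le> card F + card S" using insert by simp
    finally show ?thesis using cF by simp
  qed
qed

lemma walk_rt:
  assumes "\<forall>l. i \<le> l \<and> l < j \<longrightarrow> (vs!l, vs!Suc l) \<in> r"
  and "i \<le> j"
  shows "(vs!i, vs!j) \<in> r\<^sup>*"
  using assms
proof (induction j)
  case 0 thus ?case by simp
next
  case (Suc j)
  show ?case
  proof (cases "i = Suc j")
    case True thus ?thesis by simp
  next
    case False
    hence "(vs!i, vs!j) \<in> r\<^sup>*" using Suc by auto
    moreover have "(vs!j, vs!Suc j) \<in> r" using Suc.prems False by auto
    ultimately show ?thesis by (rule rtrancl_into_rtrancl)
  qed
qed

lemma tree_cut:
  assumes T: "oriented_tree V A" and e: "(a,b) \<in> A"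
  shows "(a,b) \<notin> (und (A - {(a,b)}))\<^sup>*"
proof
  assume ab: "(a,b) \<in> (und (A - {(a,b)}))\<^sup>*"
  let ?F = "A - {(a,b)}"
  have fin: "finite V" "A \<subseteq> V \<times> V" "V \<noteq> {}" "card A = card V - 1"
    and conn: "\<forall>u\<in>V. \<forall>v\<in>V. (u,v) \<in> (und A)\<^sup>*" using T by (auto simp: oriented_tree_def)
  have finA: "finite A" using fin by (meson finite_SigmaI finite_subset)
  have aV: "a \<in> V" using e fin by auto
  have "V \<subseteq> (und ?F)\<^sup>* `` {a}"
  proof
    fix v assume "v \<in> V"
    hence "(a,v) \<in> (und A)\<^sup>*" using conn aV by auto
    thus "v \<in> (und ?F)\<^sup>* `` {a}"
    proof (induction rule: rtrancl_induct)
      case base thus ?case by simp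
    next
      case (step w w')
      show ?case
      proof (cases "(w,w') \<in> und ?F")
        case True thus ?thesis using step.IH by (meson ImageI Image_singleton_iff rtrancl.rtrancl_into_rtrancl)
      next
        case False
        hence "w' = a \<or> w' = b" using step.hyps(2) by (auto simp: und_def)
        thus ?thesis using ab by auto
      qed
    qed
  qed
  hence "card V \<le> card ((und ?F)\<^sup>* `` {a})" using reach_finite[of ?F "{a}"] finA by (intro card_mono) auto
  also have "\<dots> \<le> card ?F + 1" using reach_card[of ?F "{a}"] finA by auto
  also have "\<dots> = card A"
  proof -
    have "card A > 0" using finA e card_gt_0_iff by blast
    thus ?thesis using finA e by (simp add: card_Diff_singleton)
  qed
  finally have "card V \<le> card A" .
  moreover have "card V > 0" using fin by (simp add: card_gt_0_iff)
  ultimately show False using fin by simp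
qed

lemma cover:
  assumes "(a,w) \<in> (und A)\<^sup>*"
  shows "(a,w) \<in> (und (A-{(a,b)}))\<^sup>* \<or> (b,w) \<in> (und (A-{(a,b)}))\<^sup>*"
  using assms
proof (induction rule: rtrancl_induct)
  case base thus ?case by simp
next
  case (step w w')
  show ?case
  proof (cases "(w,w') \<in> und (A-{(a,b)})")
    case True thus ?thesis using step.IH by (meson rtrancl.rtrancl_into_rtrancl)
  next
    case False
    hence "w' = a \<or> w' = b" using step.hyps(2) by (auto simp: und_def)
    thus ?thesis by auto
  qed
qed

lemma crossing:
  assumes tp: "temporal_path A lam vs ts" and nc: "(hd vs, last vs) \<notin> (und (A - {e}))\<^sup>*"
  shows "\<exists>idx < length ts. (vs!idx, vs!Suc idx) = e"
proof (rule ccontr)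
  assume "\<not> ?thesis"
  hence "\<forall>l. 0 \<le> l \<and> l < length ts \<longrightarrow> (vs!l, vs!Suc l) \<in> und (A - {e})"
    using tp by (auto simp: temporal_path_def und_def)
  hence "(vs!0, vs!length ts) \<in> (und (A-{e}))\<^sup>*" by (rule walk_rt) simp
  moreover have "vs \<noteq> []" "length vs = Suc (length ts)" using tp by (auto simp: temporal_path_def)
  hence "vs!0 = hd vs" "vs ! length ts = last vs" by (auto simp: hd_conv_nth last_conv_nth)
  ultimately show False using nc by simp
qed

lemma sides:
  assumes tp: "temporal_path A lam vs ts" and idx: "idx < length ts"
    and e: "vs!idx = a" "vs!Suc idx = b"
  shows "\<forall>j \<le> idx. (vs!j, a) \<in> (und (A-{(a,b)}))\<^sup>*"
  and "\<forall>j. Suc idx \<le> j \<and> j < length vs \<longrightarrow> (b, vs!j) \<in> (und (A-{(a,b)}))\<^sup>*"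
proof -
  have len: "length vs = Suc (length ts)" and dist: "distinct vs"
    and arc: "\<forall>l < length ts. (vs ! l, vs ! Suc l) \<in> A"
    using tp by (auto simp: temporal_path_def)
  show "\<forall>j \<le> idx. (vs!j, a) \<in> (und (A-{(a,b)}))\<^sup>*"
  proof (intro allI impI)
    fix j assume j: "j \<le> idx"
    have "\<forall>l. j \<le> l \<and> l < idx \<longrightarrow> (vs!l, vs!Suc l) \<in> und (A-{(a,b)})"
    proof (intro allI impI)
      fix l assume l: "j \<le> l \<and> l < idx"
      have "vs!l \<noteq> vs!idx" using dist l idx len by (simp add: nth_eq_iff_index_eq)
      thus "(vs!l, vs!Suc l) \<in> und (A-{(a,b)})" using arc l idx e by (auto simp: und_def)
    qed
    from walk_rt[OF this j] show "(vs!j, a) \<in> (und (A-{(a,b)}))\<^sup>*" using e by simp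
  qed
  show "\<forall>j. Suc idx \<le> j \<and> j < length vs \<longrightarrow> (b, vs!j) \<in> (und (A-{(a,b)}))\<^sup>*"
  proof (intro allI impI)
    fix j assume j: "Suc idx \<le> j \<and> j < length vs"
    have "\<forall>l. Suc idx \<le> l \<and> l < j \<longrightarrow> (vs!l, vs!Suc l) \<in> und (A-{(a,b)})"
    proof (intro allI impI)
      fix l assume l: "Suc idx \<le> l \<and> l < j"
      have "vs!l \<noteq> vs!idx" using dist l idx len j by (simp add: nth_eq_iff_index_eq)
      thus "(vs!l, vs!Suc l) \<in> und (A-{(a,b)})" using arc l idx e j len by (auto simp: und_def)
    qed
    from walk_rt[OF this] show "(b, vs!j) \<in> (und (A-{(a,b)}))\<^sup>*" using e j by simp
  qed
qed

lemma tp_in_V: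
  assumes tp: "temporal_path A lam vs ts" and ne: "ts \<noteq> []" and AV: "A \<subseteq> V \<times> V"
    and x: "x \<in> set vs"
  shows "x \<in> V"
proof -
  have len: "length vs = Suc (length ts)" and arc: "\<forall>l < length ts. (vs ! l, vs ! Suc l) \<in> A"
    using tp by (auto simp: temporal_path_def)
  obtain j where j: "j < length vs" "x = vs!j" using x by (auto simp: in_set_conv_nth)
  show ?thesis
  proof (cases "j < length ts")
    case True thus ?thesis using arc AV j by blast
  next
    case False
    have "length ts \<noteq> 0" using ne by simp
    hence "j = Suc (j - 1)" "j - 1 < length ts" using False j len by arith+
    thus ?thesis using arc AV j by (metis SigmaD2 subsetD)
  qed
qed

lemma combine1:
  assumes tp1: "temporal_path A lam vs1 ts1" and tp2: "temporal_path A lam vs2 ts2"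
  and i1: "i1 < length ts1" and i2: "i2 < length ts2"
  and e1: "vs1!i1 = a" "vs1!Suc i1 = b" and e2: "vs2!i2 = a" "vs2!Suc i2 = b"
  and cut: "(a,b) \<notin> (und (A - {(a,b)}))\<^sup>*"
  and le: "ts1!i1 \<le> ts2!i2"
  and AV: "A \<subseteq> V \<times> V"
  shows "temporally_connected V A lam (hd vs1) (last vs2)"
proof -
  let ?R = "(und (A - {(a,b)}))\<^sup>*"
  have len1: "length vs1 = Suc (length ts1)" and d1: "distinct vs1"
    and arc1: "\<forall>l < length ts1. (vs1 ! l, vs1 ! Suc l) \<in> A \<and> ts1 ! l \<in> lam (vs1 ! l, vs1 ! Suc l)"
    and s1: "sorted_wrt (<) ts1"
    using tp1 by (auto simp: temporal_path_def)
  have len2: "length vs2 = Suc (length ts2)" and d2: "distinct vs2"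
    and arc2: "\<forall>l < length ts2. (vs2 ! l, vs2 ! Suc l) \<in> A \<and> ts2 ! l \<in> lam (vs2 ! l, vs2 ! Suc l)"
    and s2: "sorted_wrt (<) ts2"
    using tp2 by (auto simp: temporal_path_def)
  have side1: "\<forall>j \<le> i1. (vs1!j, a) \<in> ?R" using sides(1)[OF tp1 i1 e1] .
  have side2: "\<forall>j. Suc i2 \<le> j \<and> j < length vs2 \<longrightarrow> (b, vs2!j) \<in> ?R"
    using sides(2)[OF tp2 i2 e2] .
  define xs where "xs = take (Suc i1) vs1"
  define ys where "ys = drop (Suc i2) vs2"
  define vs where "vs = xs @ ys"
  define ts where "ts = take (Suc i1) ts1 @ drop (Suc i2) ts2"
  have lxs: "length xs = Suc i1" using i1 len1 by (simp add: xs_def)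
  have lys: "length ys = length ts2 - i2" using i2 len2 by (simp add: ys_def)
  have lts: "length ts = Suc i1 + (length ts2 - Suc i2)" using i1 i2 by (simp add: ts_def)
  have xsR: "\<forall>x\<in>set xs. (x, a) \<in> ?R"
  proof
    fix x assume "x \<in> set xs"
    then obtain j where "j < Suc i1" "x = vs1!j" using lxs by (auto simp: xs_def in_set_conv_nth)
    thus "(x,a) \<in> ?R" using side1 by auto
  qed
  have ysR: "\<forall>y\<in>set ys. (b, y) \<in> ?R"
  proof
    fix y assume "y \<in> set ys"
    then obtain j where "j < length ys" "y = vs2!(Suc i2 + j)" by (auto simp: ys_def in_set_conv_nth)
    thus "(b,y) \<in> ?R" using side2 lys len2 by auto
  qed
  have disj: "set xs \<inter> set ys = {}"
  proof (rule ccontr)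
    assume "set xs \<inter> set ys \<noteq> {}"
    then obtain w where "(w,a) \<in> ?R" "(b,w) \<in> ?R" using xsR ysR by blast
    hence "(a,b) \<in> ?R" using rt_sym by (meson rtrancl_trans)
    thus False using cut by simp
  qed
  have dist: "distinct vs" using disj d1 d2 by (simp add: vs_def xs_def ys_def)
  have len: "length vs = Suc (length ts)" using lxs lys lts i2 by (simp add: vs_def)
  have vsl: "\<And>l. l < Suc i1 \<Longrightarrow> vs!l = vs1!l" using lxs by (simp add: vs_def nth_append xs_def)
  have vsr: "\<And>l. Suc i1 \<le> l \<Longrightarrow> l < length vs \<Longrightarrow> vs!l = vs2!(Suc i2 + (l - Suc i1))"
    using lxs lys i2 len2 by (simp add: vs_def nth_append ys_def)
  have tsl: "\<And>l. l < Suc i1 \<Longrightarrow> ts!l = ts1!l" using i1 by (simp add: ts_def nth_append)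
  have tsr: "\<And>l. Suc i1 \<le> l \<Longrightarrow> l < length ts \<Longrightarrow> ts!l = ts2!(Suc i2 + (l - Suc i1))"
    using i1 i2 by (simp add: ts_def nth_append)
  have arcs: "\<forall>l < length ts. (vs ! l, vs ! Suc l) \<in> A \<and> ts ! l \<in> lam (vs ! l, vs ! Suc l)"
  proof (intro allI impI)
    fix l assume l: "l < length ts"
    consider "l < i1" | "l = i1" | "Suc i1 \<le> l" by linarith
    thus "(vs ! l, vs ! Suc l) \<in> A \<and> ts ! l \<in> lam (vs ! l, vs ! Suc l)"
    proof cases
      case 1
      thus ?thesis using vsl[of l] vsl[of "Suc l"] tsl[of l] arc1 i1 by auto
    next
      case 2
      have "vs ! Suc l = vs2 ! (Suc i2)" using vsr[of "Suc l"] 2 len l by simp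
      thus ?thesis using vsl[of l] tsl[of l] arc1 i1 2 e1 e2 by auto
    next
      case 3
      have a: "vs ! l = vs2 ! (Suc i2 + (l - Suc i1))" using vsr[of l] 3 len l by simp
      have b0: "vs ! Suc l = vs2 ! (Suc i2 + (Suc l - Suc i1))" by (rule vsr) (use 3 len l in auto)
      have eq: "Suc i2 + (Suc l - Suc i1) = Suc (Suc i2 + (l - Suc i1))" using 3 by arith
      have b: "vs ! Suc l = vs2 ! Suc (Suc i2 + (l - Suc i1))" using b0 unfolding eq .
      have c: "ts ! l = ts2 ! (Suc i2 + (l - Suc i1))" using tsr[of l] 3 l by simp
      have "Suc i2 + (l - Suc i1) < length ts2" using l lts 3 by linarith
      thus ?thesis using a b c arc2 by auto
    qed
  qed
  have sorted: "sorted_wrt (<) ts"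
  proof -
    have "\<forall>x \<in> set (take (Suc i1) ts1). x \<le> ts1!i1"
    proof
      fix x assume "x \<in> set (take (Suc i1) ts1)"
      then obtain j where j: "j < Suc i1" "x = ts1!j" using i1 by (auto simp: in_set_conv_nth)
      show "x \<le> ts1!i1"
      proof (cases "j = i1")
        case False thus ?thesis using j s1 i1 by (simp add: sorted_wrt_nth_less less_imp_le)
      qed (use j in simp)
    qed
    moreover have "\<forall>y \<in> set (drop (Suc i2) ts2). ts2!i2 < y"
    proof
      fix y assume "y \<in> set (drop (Suc i2) ts2)"
      then obtain j where j: "j < length ts2 - Suc i2" "y = ts2!(Suc i2 + j)" by (auto simp: in_set_conv_nth)
      thus "ts2!i2 < y" using s2 by (simp add: sorted_wrt_nth_less)
    qed
    ultimately have cross: "\<forall>x\<in>set (take (Suc i1) ts1). \<forall>y\<in>set (drop (Suc i2) ts2). x < y"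
      using le by (meson le_less_trans order_trans)
    show ?thesis using cross s1 s2
      by (simp add: ts_def sorted_wrt_append sorted_wrt_take sorted_wrt_drop)
  qed
  have tp: "temporal_path A lam vs ts" using len dist arcs sorted by (simp add: temporal_path_def)
  have "vs1 \<noteq> []" using len1 by auto
  hence hd: "hd vs = hd vs1" using lxs i1 by (simp add: vs_def xs_def hd_append)
  have lst: "last vs = last vs2" using lys i2 by (simp add: vs_def ys_def)
  have ne: "ts \<noteq> []" using lts by auto
  have hV: "hd vs1 \<in> V" using tp_in_V[OF tp ne AV, of "hd vs"] hd len by (metis hd_in_set length_0_conv nat.distinct(1))
  have lV: "last vs2 \<in> V" using tp_in_V[OF tp ne AV, of "last vs"] lst len by (metis last_in_set length_0_conv nat.distinct(1))
  have "(hd vs1, a) \<in> ?R" using side1 len1 by (metis hd_conv_nth le0 length_0_conv nat.distinct(1))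
  moreover have "(b, last vs2) \<in> ?R" using side2 len2 i2
    by (metis Suc_leI diff_Suc_1 last_conv_nth length_0_conv lessI nat.distinct(1) not_less_eq_eq)
  ultimately have neq: "hd vs1 \<noteq> last vs2" using cut rt_sym by (metis rtrancl_trans)
  have "temporal_path_from_to A lam (vs, ts) (hd vs1) (last vs2)"
    using tp hd lst by (simp add: temporal_path_from_to_def)
  thus ?thesis using hV lV neq by (auto simp: temporally_connected_def)
qed

lemma combine:
  assumes tp1: "temporal_path A lam vs1 ts1" and tp2: "temporal_path A lam vs2 ts2"
  and i1: "i1 < length ts1" and i2: "i2 < length ts2"
  and e1: "vs1!i1 = a" "vs1!Suc i1 = b" and e2: "vs2!i2 = a" "vs2!Suc i2 = b"
  and cut: "(a,b) \<notin> (und (A - {(a,b)}))\<^sup>*"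
  and AV: "A \<subseteq> V \<times> V"
  shows "temporally_connected V A lam (hd vs1) (last vs2) \<or> temporally_connected V A lam (hd vs2) (last vs1)"
proof (cases "ts1!i1 \<le> ts2!i2")
  case True thus ?thesis using combine1[OF tp1 tp2 i1 i2 e1 e2 cut _ AV] by simp
next
  case False thus ?thesis using combine1[OF tp2 tp1 i2 i1 e2 e1 cut _ AV] by simp
qed

lemma walk_class:
  assumes "\<forall>l. Suc l < length P \<longrightarrow> (P!l, P!Suc l) \<in> und F" "x \<in> set P" "y \<in> set P"
  shows "(x,y) \<in> (und F)\<^sup>*"
proof -
  obtain j1 j2 where j: "j1 < length P" "x = P!j1" "j2 < length P" "y = P!j2"
    using assms(2,3) by (auto simp: in_set_conv_nth)
  have w: "\<forall>l. i \<le> l \<and> l < j \<longrightarrow> (P!l, P!Suc l) \<in> und F" if "j < length P" for i j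
    using assms(1) that by auto
  show ?thesis
  proof (cases "j1 \<le> j2")
    case True thus ?thesis using walk_rt[OF w[OF j(3)] True] j by simp
  next
    case False
    hence "j2 \<le> j1" by simp
    hence "(y,x) \<in> (und F)\<^sup>*" using walk_rt[OF w[OF j(1)]] j by simp
    thus ?thesis by (rule rt_sym)
  qed
qed

lemma avoid:
  assumes "(x,y) \<in> und A" "x \<noteq> z" "y \<noteq> z" "z = fst e \<or> z = snd e"
  shows "(x,y) \<in> und (A - {e})"
  using assms by (cases e) (auto simp: und_def)

lemma sep:
  assumes T: "oriented_tree V A"
  and Ww: "\<forall>l. Suc l < length W \<longrightarrow> (W!l, W!Suc l) \<in> und A" and Wd: "distinct W" and Wne: "W \<noteq> []"
  and hW: "hd W \<in> set P1" and lW: "last W \<in> set P3"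
  and P1: "\<forall>l. Suc l < length P1 \<longrightarrow> (P1!l, P1!Suc l) \<in> und A"
  and P3: "\<forall>l. Suc l < length P3 \<longrightarrow> (P3!l, P3!Suc l) \<in> und A"
  and disj: "set P1 \<inter> set P3 = {}"
  shows "\<exists>e \<in> A. (\<forall>x\<in>set P1. \<forall>y\<in>set P1. (x,y) \<in> (und (A-{e}))\<^sup>*)
       \<and> (\<forall>x\<in>set P3. \<forall>y\<in>set P3. (x,y) \<in> (und (A-{e}))\<^sup>*)
       \<and> (\<exists>x\<in>set P1. \<exists>y\<in>set P3. (x,y) \<notin> (und (A-{e}))\<^sup>*)"
proof -
  define I where "I = {l. l < length W \<and> W!l \<in> set P1}"
  have finI: "finite I" by (simp add: I_def)
  have I0: "0 \<in> I" using hW Wne by (simp add: I_def hd_conv_nth)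
  define i where "i = Max I"
  have iI: "i \<in> I" using finI I0 i_def Max_in by blast
  have imax: "\<forall>l \<in> I. l \<le> i" using finI i_def by simp
  have pi: "W!i \<in> set P1" "i < length W" using iI by (auto simp: I_def)
  have si: "Suc i < length W"
  proof (rule ccontr)
    assume "\<not> ?thesis"
    hence "i = length W - 1" using pi by simp
    hence "W!i = last W" using Wne by (simp add: last_conv_nth)
    thus False using pi lW disj by auto
  qed
  have q: "W!Suc i \<notin> set P1"
  proof
    assume "W!Suc i \<in> set P1"
    hence "Suc i \<in> I" using si by (simp add: I_def)
    thus False using imax by fastforce
  qed
  have pq: "(W!i, W!Suc i) \<in> und A" using Ww si by auto
  obtain e where e: "e \<in> A" "(fst e = W!i \<and> snd e = W!Suc i) \<or> (fst e = W!Suc i \<and> snd e = W!i)"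
    using pq by (auto simp: und_def)
  let ?R = "(und (A - {e}))\<^sup>*"
  have cut: "(W!i, W!Suc i) \<notin> ?R"
  proof
    assume h: "(W!i, W!Suc i) \<in> ?R"
    have "(fst e, snd e) \<notin> (und (A - {(fst e, snd e)}))\<^sup>*" using tree_cut[OF T, of "fst e" "snd e"] e by simp
    hence "(fst e, snd e) \<notin> ?R" by simp
    thus False using h e(2) rt_sym by metis
  qed
  have c1: "\<forall>x\<in>set P1. \<forall>y\<in>set P1. (x,y) \<in> ?R"
  proof (intro ballI)
    fix x y assume xy: "x \<in> set P1" "y \<in> set P1"
    have "\<forall>l. Suc l < length P1 \<longrightarrow> (P1!l, P1!Suc l) \<in> und (A-{e})"
    proof (intro allI impI)
      fix l assume l: "Suc l < length P1"
      have "P1!l \<noteq> W!Suc i" "P1!Suc l \<noteq> W!Suc i" using q l nth_mem by (metis Suc_lessD)+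
      thus "(P1!l, P1!Suc l) \<in> und (A-{e})" using avoid[of _ _ A "W!Suc i" e] P1 l e(2) by auto
    qed
    thus "(x,y) \<in> ?R" using walk_class xy by metis
  qed
  have p3: "W!i \<notin> set P3" using pi disj by auto
  have c3: "\<forall>x\<in>set P3. \<forall>y\<in>set P3. (x,y) \<in> ?R"
  proof (intro ballI)
    fix x y assume xy: "x \<in> set P3" "y \<in> set P3"
    have "\<forall>l. Suc l < length P3 \<longrightarrow> (P3!l, P3!Suc l) \<in> und (A-{e})"
    proof (intro allI impI)
      fix l assume l: "Suc l < length P3"
      have "P3!l \<noteq> W!i" "P3!Suc l \<noteq> W!i" using p3 l nth_mem by (metis Suc_lessD)+
      thus "(P3!l, P3!Suc l) \<in> und (A-{e})" using avoid[of _ _ A "W!i" e] P3 l e(2) by auto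
    qed
    thus "(x,y) \<in> ?R" using walk_class xy by metis
  qed
  have ql: "(W!Suc i, last W) \<in> ?R"
  proof -
    have "\<forall>l. Suc i \<le> l \<and> l < length W - 1 \<longrightarrow> (W!l, W!Suc l) \<in> und (A-{e})"
    proof (intro allI impI)
      fix l assume l: "Suc i \<le> l \<and> l < length W - 1"
      have "W!l \<noteq> W!i" "W!Suc l \<noteq> W!i" using Wd l pi by (auto simp: nth_eq_iff_index_eq)
      moreover have "(W!l, W!Suc l) \<in> und A" using Ww l by auto
      ultimately show "(W!l, W!Suc l) \<in> und (A-{e})" using avoid[of _ _ A "W!i" e] e(2) by auto
    qed
    from walk_rt[OF this] have "(W!Suc i, W!(length W - 1)) \<in> ?R" using si by simp
    thus ?thesis using Wne by (simp add: last_conv_nth)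
  qed
  hence "(W!i, last W) \<notin> ?R" using cut rt_sym by (metis rtrancl_trans)
  thus ?thesis using e c1 c3 pi lW by blast
qed

lemma tp_walk:
  assumes "temporal_path A lam vs ts"
  shows "\<forall>l. Suc l < length vs \<longrightarrow> (vs!l, vs!Suc l) \<in> und A"
  using assms by (auto simp: temporal_path_def und_def)

lemma walk_rev:
  assumes "\<forall>l. Suc l < length vs \<longrightarrow> (vs!l, vs!Suc l) \<in> und A"
  shows "\<forall>l. Suc l < length (rev vs) \<longrightarrow> (rev vs!l, rev vs!Suc l) \<in> und A"
proof (intro allI impI)
  fix l assume l: "Suc l < length (rev vs)"
  let ?j = "length vs - Suc (Suc l)"
  have "Suc ?j < length vs" using l by simp
  hence "(vs!?j, vs!Suc ?j) \<in> und A" using assms by auto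
  moreover have "rev vs ! l = vs ! Suc ?j" "rev vs ! Suc l = vs ! ?j" using l
    by (auto simp: rev_nth Suc_diff_Suc)
  ultimately show "(rev vs!l, rev vs!Suc l) \<in> und A" by (auto simp: und_def)
qed

lemma tc_sym: "temporally_connected V A lam u v \<Longrightarrow> temporally_connected V A lam v u"
  by (auto simp: temporally_connected_def)

lemma qinfo:
  assumes "temporal_path_from_to A lam P x y \<or> temporal_path_from_to A lam P y x"
    and "x \<noteq> y"
  shows "temporal_path A lam (fst P) (snd P) \<and> fst P \<noteq> [] \<and>
         ((hd (fst P) = x \<and> last (fst P) = y) \<or> (hd (fst P) = y \<and> last (fst P) = x))"
  using assms by (auto simp: temporal_path_from_to_def temporal_path_def)

theorem mainTheorem9:
  fixes V :: "'v set" and A :: "('v \<times> 'v) set" and lam :: "('v \<times> 'v) \<Rightarrow> nat set"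
    and tmax :: nat and c :: "nat \<Rightarrow> 'v" and k :: nat
    and Q :: "'v \<Rightarrow> 'v \<Rightarrow> 'v list \<times> nat list"
  assumes tree: "temporal_oriented_tree V A lam tmax"
    and cyc: "induced_cycle V (temporally_connected V A lam) c k"
    and even: "even k" and k6: "k \<ge> 6"
    and Qsym: "\<And>u v. Q u v = Q v u"
    and Qpath: "\<And>u v. temporally_connected V A lam u v \<Longrightarrow>
                 temporal_path_from_to A lam (Q u v) u v \<or> temporal_path_from_to A lam (Q u v) v u"
  shows "\<forall>i. set (fst (Q (c (i mod k)) (c ((i + 1) mod k))))
            \<inter> set (fst (Q (c ((i + 2) mod k)) (c ((i + 3) mod k)))) \<noteq> {}"
proof (intro allI)
  fix i
  let ?E = "temporally_connected V A lam"
  have T: "oriented_tree V A" using tree by (simp add: temporal_oriented_tree_def)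
  have AV: "A \<subseteq> V \<times> V" and conn: "\<forall>u\<in>V. \<forall>v\<in>V. (u,v) \<in> (und A)\<^sup>*"
    using T by (auto simp: oriented_tree_def)
  have k0: "k > 0" using k6 by simp
  have cycE: "\<forall>p<k. \<forall>q<k. ?E (c p) (c q) \<longleftrightarrow> (q = Suc p mod k \<or> p = Suc q mod k)"
    using cyc by (auto simp: induced_cycle_def)
  have consec: "\<And>x. ?E (c (x mod k)) (c ((x+1) mod k))"
  proof -
    fix x
    have "(x+1) mod k = Suc (x mod k) mod k" by (simp add: mod_Suc_eq)
    thus "?E (c (x mod k)) (c ((x+1) mod k))" using cycE[rule_format, of "x mod k" "(x+1) mod k"] k0 by simp
  qed
  have tcne: "\<And>x y. ?E x y \<Longrightarrow> x \<noteq> y" by (simp add: temporally_connected_def)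
  define u0 where "u0 = c (i mod k)"
  define u1 where "u1 = c ((i+1) mod k)"
  define u2 where "u2 = c ((i+2) mod k)"
  define g where "g t = c ((i+3+t) mod k)" for t
  have g0: "g 0 = c ((i+3) mod k)" by (simp add: g_def)
  have gk: "g (k-3) = u0"
  proof -
    have "i + 3 + (k - 3) = i + k" using k6 by simp
    thus ?thesis by (simp add: g_def u0_def)
  qed
  have adj1: "\<And>t. ?E u1 (g t) \<Longrightarrow> t \<le> k - 3 \<Longrightarrow> g t = u0"
  proof -
    fix t assume h: "?E u1 (g t)" and t: "t \<le> k - 3"
    have "(i+3+t) mod k = Suc ((i+1) mod k) mod k \<or> (i+1) mod k = Suc ((i+3+t) mod k) mod k"
      using cycE[rule_format, of "(i+1) mod k" "(i+3+t) mod k"] h k0 by (simp add: u1_def g_def)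
    hence "t = k - 3" using adj1[OF k6 t] by simp
    thus "g t = u0" using gk by simp
  qed
  have adj2: "\<And>t. ?E u2 (g t) \<Longrightarrow> t \<le> k - 3 \<Longrightarrow> g t = g 0"
  proof -
    fix t assume h: "?E u2 (g t)" and t: "t \<le> k - 3"
    have "(i+3+t) mod k = Suc ((i+2) mod k) mod k \<or> (i+2) mod k = Suc ((i+3+t) mod k) mod k"
      using cycE[rule_format, of "(i+2) mod k" "(i+3+t) mod k"] h k0 by (simp add: u2_def g_def)
    hence "t = 0" using adj2[OF k6 t] by simp
    thus "g t = g 0" by simp
  qed
  have e01: "?E u0 u1" using consec[of i] by (simp add: u0_def u1_def)
  have e12: "?E u1 u2" using consec[of "i+1"] by (simp add: u1_def u2_def)
  have e23: "?E u2 (g 0)" using consec[of "i+2"] by (simp add: u2_def g_def numeral_3_eq_3)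
  have egg: "\<And>t. ?E (g t) (g (Suc t))"
  proof -
    fix t
    have "i + 3 + Suc t = (i + 3 + t) + 1" by simp
    thus "?E (g t) (g (Suc t))" using consec[of "i+3+t"] unfolding g_def by metis
  qed
  show "set (fst (Q (c (i mod k)) (c ((i + 1) mod k))))
            \<inter> set (fst (Q (c ((i + 2) mod k)) (c ((i + 3) mod k)))) \<noteq> {}"
  proof
    assume "set (fst (Q (c (i mod k)) (c ((i + 1) mod k))))
            \<inter> set (fst (Q (c ((i + 2) mod k)) (c ((i + 3) mod k)))) = {}"
    hence disj: "set (fst (Q u0 u1)) \<inter> set (fst (Q u2 (g 0))) = {}"
      by (simp add: u0_def u1_def u2_def g0)
    define P1 where "P1 = fst (Q u0 u1)"
    define P3 where "P3 = fst (Q u2 (g 0))"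
    have q01: "temporal_path A lam P1 (snd (Q u0 u1)) \<and> P1 \<noteq> [] \<and>
         ((hd P1 = u0 \<and> last P1 = u1) \<or> (hd P1 = u1 \<and> last P1 = u0))"
      using qinfo[OF Qpath[OF e01] tcne[OF e01]] by (simp add: P1_def)
    have q23: "temporal_path A lam P3 (snd (Q u2 (g 0))) \<and> P3 \<noteq> [] \<and>
         ((hd P3 = u2 \<and> last P3 = g 0) \<or> (hd P3 = g 0 \<and> last P3 = u2))"
      using qinfo[OF Qpath[OF e23] tcne[OF e23]] by (simp add: P3_def)
    have inP1: "u0 \<in> set P1" "u1 \<in> set P1" using q01 by (metis hd_in_set last_in_set)+
    have inP3: "u2 \<in> set P3" "g 0 \<in> set P3" using q23 by (metis hd_in_set last_in_set)+
    obtain vs2 ts2 where Q12: "Q u1 u2 = (vs2, ts2)" by fastforce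
    have q12: "temporal_path A lam vs2 ts2 \<and> vs2 \<noteq> [] \<and>
         ((hd vs2 = u1 \<and> last vs2 = u2) \<or> (hd vs2 = u2 \<and> last vs2 = u1))"
      using qinfo[OF Qpath[OF e12] tcne[OF e12]] Q12 by simp
    hence tp2: "temporal_path A lam vs2 ts2" by simp
    define W where "W = (if hd vs2 = u1 then vs2 else rev vs2)"
    have Ww: "\<forall>l. Suc l < length W \<longrightarrow> (W!l, W!Suc l) \<in> und A"
      using tp_walk[OF tp2] walk_rev[OF tp_walk[OF tp2]] by (simp add: W_def)
    have Wd: "distinct W" using tp2 by (simp add: W_def temporal_path_def)
    have Wne: "W \<noteq> []" using q12 by (simp add: W_def)
    have hW: "hd W = u1" and lW: "last W = u2" using q12 by (auto simp: W_def hd_rev last_rev)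
    have wP1: "\<forall>l. Suc l < length P1 \<longrightarrow> (P1!l, P1!Suc l) \<in> und A"
      using tp_walk q01 by blast
    have wP3: "\<forall>l. Suc l < length P3 \<longrightarrow> (P3!l, P3!Suc l) \<in> und A"
      using tp_walk q23 by blast
    have disj': "set P1 \<inter> set P3 = {}" using disj by (simp add: P1_def P3_def)
    have "\<exists>e \<in> A. (\<forall>x\<in>set P1. \<forall>y\<in>set P1. (x,y) \<in> (und (A-{e}))\<^sup>*)
       \<and> (\<forall>x\<in>set P3. \<forall>y\<in>set P3. (x,y) \<in> (und (A-{e}))\<^sup>*)
       \<and> (\<exists>x\<in>set P1. \<exists>y\<in>set P3. (x,y) \<notin> (und (A-{e}))\<^sup>*)"
      by (rule sep[OF T Ww Wd Wne _ _ wP1 wP3 disj']) (use hW lW inP1 inP3 in auto)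
    then obtain e where e: "e \<in> A" and c1: "\<forall>x\<in>set P1. \<forall>y\<in>set P1. (x,y) \<in> (und (A-{e}))\<^sup>*"
      and c3: "\<forall>x\<in>set P3. \<forall>y\<in>set P3. (x,y) \<in> (und (A-{e}))\<^sup>*"
      and nc: "\<exists>x\<in>set P1. \<exists>y\<in>set P3. (x,y) \<notin> (und (A-{e}))\<^sup>*"
      by blast
    obtain a b where ab: "e = (a,b)" by fastforce
    let ?R = "(und (A-{(a,b)}))\<^sup>*"
    have cut: "(a,b) \<notin> ?R" using tree_cut[OF T] e ab by simp
    have n12: "(u1,u2) \<notin> ?R"
    proof
      assume "(u1,u2) \<in> ?R"
      then obtain x y where "x \<in> set P1" "y \<in> set P3" "(x,y) \<notin> ?R" "(x,u1) \<in> ?R" "(u2,y) \<in> ?R"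
        using nc c1 c3 inP1 inP3 ab by blast
      thus False using \<open>(u1,u2) \<in> ?R\<close> by (meson rtrancl_trans)
    qed
    have "(hd vs2, last vs2) \<notin> ?R"
    proof
      assume h: "(hd vs2, last vs2) \<in> ?R"
      have "(u1,u2) \<in> ?R"
      proof (cases "hd vs2 = u1")
        case True thus ?thesis using h q12 by auto
      next
        case False thus ?thesis using h q12 rt_sym[of "hd vs2" "last vs2"] by auto
      qed
      thus False using n12 by simp
    qed
    then obtain idx2 where idx2: "idx2 < length ts2" "(vs2!idx2, vs2!Suc idx2) = (a,b)"
      using crossing[OF tp2] by blast
    have len2: "length vs2 = Suc (length ts2)" using tp2 by (simp add: temporal_path_def)
    have "(hd vs2, a) \<in> ?R" using sides(1)[OF tp2 idx2(1), of a b] idx2 q12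
      by (simp add: hd_conv_nth)
    moreover have "(b, last vs2) \<in> ?R" using sides(2)[OF tp2 idx2(1), of a b] idx2 q12 len2
      by (simp add: last_conv_nth)
    ultimately have sa2: "(a, hd vs2) \<in> ?R" "(b, last vs2) \<in> ?R" using rt_sym by auto
    define sA where "sA w = ((a,w) \<in> ?R)" for w
    have notboth: "\<And>w. (b,w) \<in> ?R \<Longrightarrow> \<not> sA w"
    proof
      fix w assume h1: "(b,w) \<in> ?R" and h2: "sA w"
      have "(w,b) \<in> ?R" using h1 by (rule rt_sym)
      hence "(a,b) \<in> ?R" using rtrancl_trans[OF h2[unfolded sA_def]] by blast
      thus False using cut by simp
    qed
    have cls: "\<And>x y. (x,y) \<in> ?R \<Longrightarrow> sA x = sA y"
    proof -
      fix x y assume h: "(x,y) \<in> ?R"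
      show "sA x = sA y"
      proof
        assume "sA x" thus "sA y" using h unfolding sA_def by (meson rtrancl_trans)
      next
        assume "sA y" thus "sA x" using rt_sym[OF h] unfolding sA_def by (meson rtrancl_trans)
      qed
    qed
    have s12: "sA u1 = (\<not> sA u2)"
    proof (cases "hd vs2 = u1")
      case True
      hence "last vs2 = u2" using q12 tcne[OF e12] by auto
      thus ?thesis using True sa2 notboth unfolding sA_def by auto
    next
      case False
      hence "hd vs2 = u2" "last vs2 = u1" using q12 by auto
      thus ?thesis using sa2 notboth unfolding sA_def by auto
    qed
    have s01: "sA u0 = sA u1" using cls c1 inP1 ab by simp
    have s23: "sA u2 = sA (g 0)" using cls c3 inP3 ab by simp
    have P0: "sA (g 0) = sA (g 0)" by simp
    have Pk: "sA (g (k-3)) \<noteq> sA (g 0)" using gk s01 s12 s23 by simp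
    obtain m where m: "m < k - 3" "sA (g m) = sA (g 0)" "sA (g (Suc m)) \<noteq> sA (g 0)"
      using ivt[of "\<lambda>t. sA (g t) = sA (g 0)" "k-3", OF P0 Pk] by blast
    have diff: "sA (g m) \<noteq> sA (g (Suc m))" using m by simp
    have eg: "?E (g m) (g (Suc m))" by (rule egg)
    obtain vsj tsj where Qj: "Q (g m) (g (Suc m)) = (vsj, tsj)" by fastforce
    have qj: "temporal_path A lam vsj tsj \<and> vsj \<noteq> [] \<and>
         ((hd vsj = g m \<and> last vsj = g (Suc m)) \<or> (hd vsj = g (Suc m) \<and> last vsj = g m))"
      using qinfo[OF Qpath[OF eg] tcne[OF eg]] Qj by simp
    hence tpj: "temporal_path A lam vsj tsj" by simp
    have "(hd vsj, last vsj) \<notin> ?R"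
    proof
      assume "(hd vsj, last vsj) \<in> ?R"
      hence "sA (hd vsj) = sA (last vsj)" by (rule cls)
      thus False using diff qj by auto
    qed
    then obtain idxj where idxj: "idxj < length tsj" "(vsj!idxj, vsj!Suc idxj) = (a,b)"
      using crossing[OF tpj] by blast
    have lenj: "length vsj = Suc (length tsj)" using tpj by (simp add: temporal_path_def)
    have "(hd vsj, a) \<in> ?R" using sides(1)[OF tpj idxj(1), of a b] idxj qj
      by (simp add: hd_conv_nth)
    hence saj: "sA (hd vsj)" unfolding sA_def by (rule rt_sym)
    have "(b, last vsj) \<in> ?R" using sides(2)[OF tpj idxj(1), of a b] idxj qj lenj
      by (simp add: last_conv_nth)
    hence nsaj: "\<not> sA (last vsj)" using notboth by auto
    have sa2': "sA (hd vs2)" "\<not> sA (last vs2)" using sa2 notboth unfolding sA_def by auto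
    have final: "\<And>x t. x \<in> {u1,u2} \<Longrightarrow> t \<in> {m, Suc m} \<Longrightarrow> ?E x (g t) \<Longrightarrow> sA x = sA (g t)"
    proof -
      fix x t assume x: "x \<in> {u1,u2}" and t: "t \<in> {m, Suc m}" and h: "?E x (g t)"
      have tk: "t \<le> k - 3" using t m by auto
      show "sA x = sA (g t)"
      proof (cases "x = u1")
        case True thus ?thesis using adj1[OF _ tk] h s01 by auto
      next
        case False
        hence "x = u2" using x by simp
        thus ?thesis using adj2[OF _ tk] h s23 by auto
      qed
    qed
    have "?E (hd vs2) (last vsj) \<or> ?E (hd vsj) (last vs2)"
      using combine[OF tp2 tpj idx2(1) idxj(1) _ _ _ _ cut AV] idx2 idxj by auto
    thus False
    proof
      assume h: "?E (hd vs2) (last vsj)"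
      have x: "hd vs2 \<in> {u1,u2}" using q12 by auto
      obtain t where t: "t \<in> {m, Suc m}" "last vsj = g t" using qj by auto
      have "?E (hd vs2) (g t)" using h t(2) by simp
      from final[OF x t(1) this] have "sA (hd vs2) = sA (last vsj)" using t(2) by simp
      thus False using sa2' nsaj by simp
    next
      assume h: "?E (hd vsj) (last vs2)"
      hence h': "?E (last vs2) (hd vsj)" by (rule tc_sym)
      have x: "last vs2 \<in> {u1,u2}" using q12 by auto
      obtain t where t: "t \<in> {m, Suc m}" "hd vsj = g t" using qj by auto
      have "?E (last vs2) (g t)" using h' t(2) by simp
      from final[OF x t(1) this] have "sA (last vs2) = sA (hd vsj)" using t(2) by simp
      thus False using sa2' saj by simp
    qed
  qed
qed

end
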